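(* Let $N\ge 1$, let $\lambda_1,\dots,\lambda_N$ be distinct nonzero real numbers and $\Lambda=\operatorname{diag}(\lambda_1,\dots,\lambda_N)$. Let $u,f,g$ be smooth complex-valued functions and $v_1,v_2$ smooth real-valued functions of $(x,y,t)$ on a domain. Suppose that for each $\alpha=1,\dots,N$ the vector $F_\alpha=(\phi_{1\alpha},\phi_{2\alpha},\phi_{3\alpha})^T$ is a smooth solution of the Lax system $$F_{\alpha,x}=W^x(\lambda_\alpha)F_\alpha,\qquad F_{\alpha,y}=W^y(\lambda_\alpha)F_\alpha,\qquad F_{\alpha,t}=W^t(\lambda_\alpha)F_\alpha .$$ Then the Lax equations $$L_x(\lambda)=[W^x(\lambda),L(\lambda)],\qquad L_y(\lambda)=[W^y(\lambda),L(\lambda)],\qquad L_t(\lambda)=[W^t(\lambda),L(\lambda)]$$ hold for all $\lambda\in\mathbb C\setminus\{\lambda_1,\dots,\lambda_N\}$ if and only if $$\langle\Phi_2,\Phi_1\rangle=-\mathrm{i}\,u,\qquad \langle\Phi_3,\Phi_1\rangle=f,\qquad \langle\Phi_3,\Phi_2\rangle=-g .$$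
   Context: Notation: $\Phi_j=(\phi_{j1},\dots,\phi_{jN})^T\in\mathbb C^N$ for $j=1,2,3$; for $V,W\in\mathbb C^N$, $\langle V,W\rangle=V^*W=\sum_\alpha \bar V_\alpha W_\alpha$, so $\langle\Phi_i,\Lambda^m\Phi_j\rangle=\sum_{\alpha=1}^N\lambda_\alpha^m\bar\phi_{i\alpha}\phi_{j\alpha}$. The Lax matrices are $$W^x(\lambda)=\begin{pmatrix}\mathrm{i}\lambda&0&\mathrm{i}f\\0&\mathrm{i}\lambda&\mathrm{i}g\\ \mathrm{i}\bar f&\mathrm{i}\bar g&0\end{pmatrix},\qquad W^y(\lambda)=\begin{pmatrix}\mathrm{i}\lambda&u&\mathrm{i}f\\-\bar u&-\mathrm{i}\lambda&-\mathrm{i}g\\ \mathrm{i}\bar f&-\mathrm{i}\bar g&0\end{pmatrix},$$ $$W^t(\lambda)=\begin{pmatrix}-2\mathrm{i}\lambda^2+\mathrm{i}|u|^2+\mathrm{i}v_1 & -2u\lambda+\mathrm{i}u_y & -2\mathrm{i}f\lambda-2f_y\\ 2\bar u\lambda+\mathrm{i}\bar u_y & 2\mathrm{i}\lambda^2-\mathrm{i}|u|^2-\mathrm{i}v_2 & 2\mathrm{i}g\lambda-2g_y\\ -2\mathrm{i}\bar f\lambda+2\bar f_y & 2\mathrm{i}\bar g\lambda+2\bar g_y & -2\mathrm{i}(|f|^2-|g|^2)\end{pmatrix}.$$ The matrix $L(\lambda)$ is $$L(\lambda)=C+\sum_{\alpha=1}^N\frac{1}{\lambda-\lambda_\alpha}F_\alpha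 F_\alpha^*,\qquad C=\operatorname{diag}(1,-1,0),$$ i.e. $L(\lambda)_{ab}=C_{ab}+\sum_\alpha \phi_{a\alpha}\bar\phi_{b\alpha}/(\lambda-\lambda_\alpha)$. *)

theory Defs
  imports "HOL-Analysis.Analysis"
begin

type_synonym pt = "real \<times> real \<times> real"

definition pdx :: "(pt \<Rightarrow> 'a::real_normed_vector) \<Rightarrow> pt \<Rightarrow> 'a" where
  "pdx h p = frechet_derivative h (at p) (1, 0, 0)"
definition pdy :: "(pt \<Rightarrow> 'a::real_normed_vector) \<Rightarrow> pt \<Rightarrow> 'a" where
  "pdy h p = frechet_derivative h (at p) (0, 1, 0)"
definition pdt :: "(pt \<Rightarrow> 'a::real_normed_vector) \<Rightarrow> pt \<Rightarrow> 'a" where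
  "pdt h p = frechet_derivative h (at p) (0, 0, 1)"

fun Ck :: "nat \<Rightarrow> pt set \<Rightarrow> (pt \<Rightarrow> 'a::real_normed_vector) \<Rightarrow> bool" where
  "Ck 0 S h = continuous_on S h"
| "Ck (Suc k) S h = ((\<forall>p\<in>S. h differentiable (at p)) \<and>
                      (\<forall>v. Ck k S (\<lambda>p. frechet_derivative h (at p) v)))"

definition smooth_on :: "pt set \<Rightarrow> (pt \<Rightarrow> 'a::real_normed_vector) \<Rightarrow> bool" where
  "smooth_on S h \<longleftrightarrow> (\<forall>k. Ck k S h)"

(* 3x3 complex matrices as entry functions, indices 1..3 *)
type_synonym cmat = "nat \<Rightarrow> nat \<Rightarrow> complex"

definition mat3 :: "complex \<Rightarrow> complex \<Rightarrow> complex \<Rightarrow> complex \<Rightarrow> complex \<Rightarrow> complex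
   \<Rightarrow> complex \<Rightarrow> complex \<Rightarrow> complex \<Rightarrow> cmat" where
  "mat3 a11 a12 a13 a21 a22 a23 a31 a32 a33 = (\<lambda>i j.
     if i = 1 then (if j = 1 then a11 else if j = 2 then a12 else if j = 3 then a13 else 0)
     else if i = 2 then (if j = 1 then a21 else if j = 2 then a22 else if j = 3 then a23 else 0)
     else if i = 3 then (if j = 1 then a31 else if j = 2 then a32 else if j = 3 then a33 else 0)
     else 0)"

definition mmul :: "cmat \<Rightarrow> cmat \<Rightarrow> cmat" where
  "mmul A B = (\<lambda>i j. \<Sum>k\<in>{1..3}. A i k * B k j)"

definition comm :: "cmat \<Rightarrow> cmat \<Rightarrow> cmat" where
  "comm A B = (\<lambda>i j. mmul A B i j - mmul B A i j)"

definition Cmat :: cmat where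
  "Cmat = mat3 1 0 0  0 (-1) 0  0 0 0"

definition Wx :: "(pt \<Rightarrow> complex) \<Rightarrow> (pt \<Rightarrow> complex) \<Rightarrow> complex \<Rightarrow> pt \<Rightarrow> cmat" where
  "Wx f g lam p = mat3
     (\<i> * lam) 0 (\<i> * f p)
     0 (\<i> * lam) (\<i> * g p)
     (\<i> * cnj (f p)) (\<i> * cnj (g p)) 0"

definition Wy :: "(pt \<Rightarrow> complex) \<Rightarrow> (pt \<Rightarrow> complex) \<Rightarrow> (pt \<Rightarrow> complex) \<Rightarrow> complex \<Rightarrow> pt \<Rightarrow> cmat" where
  "Wy u f g lam p = mat3
     (\<i> * lam) (u p) (\<i> * f p)
     (- cnj (u p)) (- \<i> * lam) (- \<i> * g p)
     (\<i> * cnj (f p)) (- \<i> * cnj (g p)) 0"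

definition Wt :: "(pt \<Rightarrow> complex) \<Rightarrow> (pt \<Rightarrow> complex) \<Rightarrow> (pt \<Rightarrow> complex) \<Rightarrow> (pt \<Rightarrow> real)
     \<Rightarrow> (pt \<Rightarrow> real) \<Rightarrow> complex \<Rightarrow> pt \<Rightarrow> cmat" where
  "Wt u f g v1 v2 lam p = mat3
     (- 2 * \<i> * lam\<^sup>2 + \<i> * of_real ((cmod (u p))\<^sup>2) + \<i> * of_real (v1 p))
     (- 2 * u p * lam + \<i> * pdy u p)
     (- 2 * \<i> * f p * lam - 2 * pdy f p)
     (2 * cnj (u p) * lam + \<i> * cnj (pdy u p))
     (2 * \<i> * lam\<^sup>2 - \<i> * of_real ((cmod (u p))\<^sup>2) - \<i> * of_real (v2 p))
     (2 * \<i> * g p * lam - 2 * pdy g p)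
     (- 2 * \<i> * cnj (f p) * lam + 2 * cnj (pdy f p))
     (2 * \<i> * cnj (g p) * lam + 2 * cnj (pdy g p))
     (- 2 * \<i> * of_real ((cmod (f p))\<^sup>2 - (cmod (g p))\<^sup>2))"

(* phi a \<alpha> p = \<phi>_{a\<alpha>} at point p, a \<in> {1,2,3}, \<alpha> \<in> {1..N} *)
definition Lmat :: "nat \<Rightarrow> (nat \<Rightarrow> real) \<Rightarrow> (nat \<Rightarrow> nat \<Rightarrow> pt \<Rightarrow> complex) \<Rightarrow> complex \<Rightarrow> pt \<Rightarrow> cmat" where
  "Lmat N lams phi lam p = (\<lambda>a b. Cmat a b +
     (\<Sum>\<alpha>\<in>{1..N}. phi a \<alpha> p * cnj (phi b \<alpha> p) / (lam - of_real (lams \<alpha>))))"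

definition ip :: "nat \<Rightarrow> (nat \<Rightarrow> nat \<Rightarrow> pt \<Rightarrow> complex) \<Rightarrow> nat \<Rightarrow> nat \<Rightarrow> pt \<Rightarrow> complex" where
  "ip N phi i j p = (\<Sum>\<alpha>\<in>{1..N}. cnj (phi i \<alpha> p) * phi j \<alpha> p)"

end

theory Submission
  imports Defs
begin

lemma hd_cnj: "(g has_derivative g') F \<Longrightarrow> ((\<lambda>x. cnj (g x)) has_derivative (\<lambda>x. cnj (g' x))) F"
  by (rule bounded_linear.has_derivative[OF bounded_linear_cnj])

lemma hd_div: "(g has_derivative g') F \<Longrightarrow> ((\<lambda>x. g x / c) has_derivative (\<lambda>x. g' x / (c::complex))) F"
  by (rule bounded_linear.has_derivative[OF bounded_linear_divide])

abbreviation FD where "FD h p \<equiv> frechet_derivative h (at p)"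

lemma deriv_L:
  assumes "\<forall>a\<in>{1..3}. \<forall>\<alpha>\<in>{1..N}. phi a \<alpha> differentiable (at p)" "a\<in>{1..3}" "b\<in>{1..3}"
  shows "FD (\<lambda>q. Lmat N lams phi lam q a b) p v =
    (\<Sum>\<alpha>\<in>{1..N}. (FD (phi a \<alpha>) p v * cnj (phi b \<alpha> p) + phi a \<alpha> p * cnj (FD (phi b \<alpha>) p v)) / (lam - of_real (lams \<alpha>)))"
proof -
  have dphi: "\<And>a \<alpha>. a\<in>{1..3} \<Longrightarrow> \<alpha>\<in>{1..N} \<Longrightarrow> (phi a \<alpha> has_derivative FD (phi a \<alpha>) p) (at p)"
    using assms(1) frechet_derivative_works by blast
  have "((\<lambda>q. Lmat N lams phi lam q a b) has_derivative
     (\<lambda>v. 0 + (\<Sum>\<alpha>\<in>{1..N}. (phi a \<alpha> p * cnj (FD (phi b \<alpha>) p v) + FD (phi a \<alpha>) p v * cnj (phi b \<alpha> p)) / (lam - of_real (lams \<alpha>))))) (at p)"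
    unfolding Lmat_def
    apply (intro has_derivative_add has_derivative_const has_derivative_sum hd_div has_derivative_mult hd_cnj)
    using dphi assms(2,3) by auto
  from frechet_derivative_at[OF this] show ?thesis
    by (metis (no_types, lifting) add.commute add_0 sum.cong)
qed

lemma deriv_ip:
  assumes "\<forall>a\<in>{1..3}. \<forall>\<alpha>\<in>{1..N}. phi a \<alpha> differentiable (at p)" "i\<in>{1..3}" "j\<in>{1..3}"
  shows "FD (ip N phi i j) p v =
    (\<Sum>\<alpha>\<in>{1..N}. cnj (FD (phi i \<alpha>) p v) * phi j \<alpha> p + cnj (phi i \<alpha> p) * FD (phi j \<alpha>) p v)"
proof -
  have dphi: "\<And>a \<alpha>. a\<in>{1..3} \<Longrightarrow> \<alpha>\<in>{1..N} \<Longrightarrow> (phi a \<alpha> has_derivative FD (phi a \<alpha>) p) (at p)"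
    using assms(1) frechet_derivative_works by blast
  have "((\<lambda>q. ip N phi i j q) has_derivative
     (\<lambda>v. (\<Sum>\<alpha>\<in>{1..N}. cnj (phi i \<alpha> p) * FD (phi j \<alpha>) p v + cnj (FD (phi i \<alpha>) p v) * phi j \<alpha> p))) (at p)"
    unfolding ip_def
    apply (intro has_derivative_sum has_derivative_mult hd_cnj)
    using dphi assms(2,3) by auto
  from frechet_derivative_at[OF this] show ?thesis
    by (metis (no_types, lifting) add.commute sum.cong)
qed

lemma s3: "sum f {1..3::nat} = f 1 + f 2 + f 3" "sum f {Suc 0..3} = f 1 + f 2 + f 3"
  by (simp_all add: numeral_3_eq_3 numeral_2_eq_2)

lemma alpha_id0:
  fixes ph d :: "nat \<Rightarrow> complex" and Wa W X Y :: cmat and l :: real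
  assumes d: "\<forall>a\<in>{1..3}. d a = (\<Sum>k\<in>{1..3}. Wa a k * ph k)"
  and ah: "\<forall>a\<in>{1..3}. \<forall>b\<in>{1..3}. cnj (Wa a b) = - Wa b a"
  and dec: "\<forall>a\<in>{1..3}. \<forall>b\<in>{1..3}. W a b - Wa a b = c * (X a b + of_real l * Y a b)"
  and ab: "a\<in>{1..3}" "b\<in>{1..3}"
  shows "d a * cnj (ph b) + ph a * cnj (d b) =
     (\<Sum>k\<in>{1..3}. W a k * (ph k * cnj (ph b)) - (ph a * cnj (ph k)) * W k b)
   - c * (\<Sum>k\<in>{1..3}. X a k * (ph k * cnj (ph b)) - (ph a * cnj (ph k)) * X k b)
   - c * (\<Sum>k\<in>{1..3}. Y a k * (of_real l * ph k * cnj (ph b)) - (of_real l * ph a * cnj (ph k)) * Y k b)"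
proof -
  have W: "Wa a b = W a b - c * (X a b + of_real l * Y a b)" if "a\<in>{1..3}" "b\<in>{1..3}" for a b
    by (simp add: dec[rule_format, OF that, symmetric])
  have "d a * cnj (ph b) + ph a * cnj (d b) = (\<Sum>k\<in>{1..3}. Wa a k * ph k * cnj (ph b) - ph a * cnj (ph k) * Wa k b)"
  proof -
    have 1: "d a * cnj (ph b) = (\<Sum>k\<in>{1..3}. Wa a k * ph k * cnj (ph b))"
      using d ab by (simp add: sum_distrib_right)
    have "cnj (d b) = (\<Sum>k\<in>{1..3}. cnj (Wa b k) * cnj (ph k))"
      using d ab by simp
    also have "\<dots> = (\<Sum>k\<in>{1..3}. - Wa k b * cnj (ph k))"
      using ah ab by (intro sum.cong) auto
    finally have 2: "ph a * cnj (d b) = - (\<Sum>k\<in>{1..3}. ph a * cnj (ph k) * Wa k b)"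
      by (simp add: sum_distrib_left sum_negf mult_ac)
    show ?thesis unfolding 1 2 by (simp add: sum_subtractf)
  qed
  also have "\<dots> = (\<Sum>k\<in>{1..3}. (W a k * (ph k * cnj (ph b)) - (ph a * cnj (ph k)) * W k b)
     - c * (X a k * (ph k * cnj (ph b)) - (ph a * cnj (ph k)) * X k b)
     - c * (Y a k * (of_real l * ph k * cnj (ph b)) - (of_real l * ph a * cnj (ph k)) * Y k b))"
    apply (rule sum.cong, simp)
    using ab by (simp add: W algebra_simps)
  also have "\<dots> = (\<Sum>k\<in>{1..3}. W a k * (ph k * cnj (ph b)) - (ph a * cnj (ph k)) * W k b)
   - c * (\<Sum>k\<in>{1..3}. X a k * (ph k * cnj (ph b)) - (ph a * cnj (ph k)) * X k b)
   - c * (\<Sum>k\<in>{1..3}. Y a k * (of_real l * ph k * cnj (ph b)) - (of_real l * ph a * cnj (ph k)) * Y k b)"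
    by (simp add: sum_subtractf sum_distrib_left[symmetric] right_diff_distrib[symmetric])
  finally show ?thesis .
qed

lemma divaux: "(c::complex) \<noteq> 0 \<Longrightarrow> (A - c*B - c*D)/c = A/c - B - D"
  by (simp add: field_simps)

lemma alpha_id:
  fixes ph d :: "nat \<Rightarrow> complex" and Wa W X Y :: cmat and l :: real
  assumes d: "\<forall>a\<in>{1..3}. d a = (\<Sum>k\<in>{1..3}. Wa a k * ph k)"
  and ah: "\<forall>a\<in>{1..3}. \<forall>b\<in>{1..3}. cnj (Wa a b) = - Wa b a"
  and dec: "\<forall>a\<in>{1..3}. \<forall>b\<in>{1..3}. W a b - Wa a b = (lam - of_real l) * (X a b + of_real l * Y a b)"
  and ne: "lam \<noteq> of_real l"
  and ab: "a\<in>{1..3}" "b\<in>{1..3}"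
  shows "(d a * cnj (ph b) + ph a * cnj (d b)) / (lam - of_real l) =
     (\<Sum>k\<in>{1..3}. W a k * (ph k * cnj (ph b) / (lam - of_real l)) - (ph a * cnj (ph k) / (lam - of_real l)) * W k b)
   - (\<Sum>k\<in>{1..3}. X a k * (ph k * cnj (ph b)) - (ph a * cnj (ph k)) * X k b)
   - (\<Sum>k\<in>{1..3}. Y a k * (of_real l * ph k * cnj (ph b)) - (of_real l * ph a * cnj (ph k)) * Y k b)"
proof -
  have ne': "lam - of_real l \<noteq> 0" using ne by simp
  have "(\<Sum>k\<in>{1..3}. W a k * (ph k * cnj (ph b) / (lam - of_real l)) - (ph a * cnj (ph k) / (lam - of_real l)) * W k b)
     = (\<Sum>k\<in>{1..3}. W a k * (ph k * cnj (ph b)) - (ph a * cnj (ph k)) * W k b) / (lam - of_real l)"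
    by (simp add: sum_divide_distrib diff_divide_distrib)
  then show ?thesis
    unfolding alpha_id0[OF d ah dec ab] divaux[OF ne'] by simp
qed

lemma comm_add: "comm W (\<lambda>a b. C a b + S a b) a b - comm W C a b = comm W S a b"
  unfolding comm_def mmul_def by (simp add: sum.distrib algebra_simps)

lemma comm_sum: "comm X (\<lambda>a b. \<Sum>\<alpha>\<in>A. G \<alpha> a b) a b = (\<Sum>\<alpha>\<in>A. \<Sum>k\<in>{1..3}. X a k * G \<alpha> k b - G \<alpha> a k * X k b)"
  unfolding comm_def mmul_def
  by (simp add: sum_subtractf sum_distrib_left sum_distrib_right sum.swap[of _ A])

lemma sumL:
  fixes ph d :: "nat \<Rightarrow> nat \<Rightarrow> complex" and Wa :: "nat \<Rightarrow> cmat" and W X Y :: cmat and l :: "nat \<Rightarrow> real"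
  assumes d: "\<forall>\<alpha>\<in>{1..N}. \<forall>a\<in>{1..3}. d a \<alpha> = (\<Sum>k\<in>{1..3}. Wa \<alpha> a k * ph k \<alpha>)"
  and ah: "\<forall>\<alpha>\<in>{1..N}. \<forall>a\<in>{1..3}. \<forall>b\<in>{1..3}. cnj (Wa \<alpha> a b) = - Wa \<alpha> b a"
  and dec: "\<forall>\<alpha>\<in>{1..N}. \<forall>a\<in>{1..3}. \<forall>b\<in>{1..3}. W a b - Wa \<alpha> a b = (lam - of_real (l \<alpha>)) * (X a b + of_real (l \<alpha>) * Y a b)"
  and ne: "\<forall>\<alpha>\<in>{1..N}. lam \<noteq> of_real (l \<alpha>)"
  and ab: "a\<in>{1..3}" "b\<in>{1..3}"
  shows "(\<Sum>\<alpha>\<in>{1..N}. (d a \<alpha> * cnj (ph b \<alpha>) + ph a \<alpha> * cnj (d b \<alpha>)) / (lam - of_real (l \<alpha>))) =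
   comm W (\<lambda>a b. Cmat a b + (\<Sum>\<alpha>\<in>{1..N}. ph a \<alpha> * cnj (ph b \<alpha>) / (lam - of_real (l \<alpha>)))) a b - comm W Cmat a b
   - comm X (\<lambda>a b. \<Sum>\<alpha>\<in>{1..N}. ph a \<alpha> * cnj (ph b \<alpha>)) a b
   - comm Y (\<lambda>a b. \<Sum>\<alpha>\<in>{1..N}. of_real (l \<alpha>) * ph a \<alpha> * cnj (ph b \<alpha>)) a b" (is "_ = ?R")
proof -
  have "(\<Sum>\<alpha>\<in>{1..N}. (d a \<alpha> * cnj (ph b \<alpha>) + ph a \<alpha> * cnj (d b \<alpha>)) / (lam - of_real (l \<alpha>))) =
    (\<Sum>\<alpha>\<in>{1..N}. (\<Sum>k\<in>{1..3}. W a k * (ph k \<alpha> * cnj (ph b \<alpha>) / (lam - of_real (l \<alpha>))) - (ph a \<alpha> * cnj (ph k \<alpha>) / (lam - of_real (l \<alpha>))) * W k b)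
   - (\<Sum>k\<in>{1..3}. X a k * (ph k \<alpha> * cnj (ph b \<alpha>)) - (ph a \<alpha> * cnj (ph k \<alpha>)) * X k b)
   - (\<Sum>k\<in>{1..3}. Y a k * (of_real (l \<alpha>) * ph k \<alpha> * cnj (ph b \<alpha>)) - (of_real (l \<alpha>) * ph a \<alpha> * cnj (ph k \<alpha>)) * Y k b))"
    (is "_ = sum ?F _")
  proof (rule sum.cong[OF refl])
    fix \<alpha> assume "\<alpha> \<in> {1..N}"
    then show "(d a \<alpha> * cnj (ph b \<alpha>) + ph a \<alpha> * cnj (d b \<alpha>)) / (lam - of_real (l \<alpha>)) = ?F \<alpha>"
      using d ah dec ne ab by (intro alpha_id[where d="\<lambda>a. d a \<alpha>" and ph="\<lambda>a. ph a \<alpha>" and Wa="Wa \<alpha>" and l="l \<alpha>"]) auto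
  qed
  also have "\<dots> = sum (\<lambda>\<alpha>. \<Sum>k\<in>{1..3}. W a k * (ph k \<alpha> * cnj (ph b \<alpha>) / (lam - of_real (l \<alpha>))) - (ph a \<alpha> * cnj (ph k \<alpha>) / (lam - of_real (l \<alpha>))) * W k b) {1..N}
   - sum (\<lambda>\<alpha>. \<Sum>k\<in>{1..3}. X a k * (ph k \<alpha> * cnj (ph b \<alpha>)) - (ph a \<alpha> * cnj (ph k \<alpha>)) * X k b) {1..N}
   - sum (\<lambda>\<alpha>. \<Sum>k\<in>{1..3}. Y a k * (of_real (l \<alpha>) * ph k \<alpha> * cnj (ph b \<alpha>)) - (of_real (l \<alpha>) * ph a \<alpha> * cnj (ph k \<alpha>)) * Y k b) {1..N}"
    by (simp add: sum_subtractf)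
  also have "\<dots> = ?R" 
    unfolding comm_add comm_sum by (simp add: mult.assoc)
  finally show ?thesis .
qed


definition A2 :: cmat where "A2 = mat3 (-2*\<i>) 0 0 0 (2*\<i>) 0 0 0 0"
definition A1 :: "complex \<Rightarrow> complex \<Rightarrow> complex \<Rightarrow> cmat" where
  "A1 u f g = mat3 0 (-2*u) (-2*\<i>*f) (2*cnj u) 0 (2*\<i>*g) (-2*\<i>*cnj f) (2*\<i>*cnj g) 0"
definition Jy :: cmat where "Jy = mat3 \<i> 0 0 0 (-\<i>) 0 0 0 0"

lemma t_alg:
  fixes P Q :: cmat
  assumes cP: "\<And>a b. cnj (P a b) = P b a" and cQ: "\<And>a b. cnj (Q a b) = Q b a"
  and PP: "P 1 2 = -\<i>*u p" "P 2 1 = \<i> * cnj (u p)" "P 1 3 = f p" "P 3 1 = cnj (f p)" "P 2 3 = -g p" "P 3 2 = -cnj (g p)"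
  and uy: "pdy u p = \<i> * (comm (Wy u f g 0 p) P 1 2 + comm Jy Q 1 2)"
  and fy: "pdy f p = comm (Wy u f g 0 p) P 1 3 + comm Jy Q 1 3"
  and gy: "pdy g p = - (comm (Wy u f g 0 p) P 2 3 + comm Jy Q 2 3)"
  and ab: "a \<in> {1..3}" "b \<in> {1..3}"
  shows "comm (Wt u f g v1 v2 lam p) Cmat a b + comm (\<lambda>a b. lam * A2 a b + A1 (u p) (f p) (g p) a b) P a b + comm A2 Q a b = 0"
proof -
  have "a = 1 \<or> a = 2 \<or> a = 3" "b = 1 \<or> b = 2 \<or> b = 3" using ab by auto
  then show ?thesis
    apply (elim disjE)
    apply (simp_all add: comm_def mmul_def s3 mat3_def Cmat_def Wt_def A1_def A2_def Jy_def Wy_def uy fy gy PP PP[unfolded One_nat_def] cP cQ)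
    done
qed

definition Jx :: cmat where "Jx = mat3 \<i> 0 0 0 \<i> 0 0 0 0"

lemma sumIP:
  fixes ph d :: "nat \<Rightarrow> nat \<Rightarrow> complex" and Wa :: "nat \<Rightarrow> cmat" and X Y :: cmat and l :: "nat \<Rightarrow> real"
  assumes d: "\<forall>\<alpha>\<in>{1..N}. \<forall>a\<in>{1..3}. d a \<alpha> = (\<Sum>k\<in>{1..3}. Wa \<alpha> a k * ph k \<alpha>)"
  and ah: "\<forall>\<alpha>\<in>{1..N}. \<forall>a\<in>{1..3}. \<forall>b\<in>{1..3}. cnj (Wa \<alpha> a b) = - Wa \<alpha> b a"
  and dec: "\<forall>\<alpha>\<in>{1..N}. \<forall>a\<in>{1..3}. \<forall>b\<in>{1..3}. Wa \<alpha> a b = X a b + of_real (l \<alpha>) * Y a b"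
  and ij: "i\<in>{1..3}" "j\<in>{1..3}"
  shows "(\<Sum>\<alpha>\<in>{1..N}. cnj (d i \<alpha>) * ph j \<alpha> + cnj (ph i \<alpha>) * d j \<alpha>) =
    comm X (\<lambda>a b. \<Sum>\<alpha>\<in>{1..N}. ph a \<alpha> * cnj (ph b \<alpha>)) j i
  + comm Y (\<lambda>a b. \<Sum>\<alpha>\<in>{1..N}. of_real (l \<alpha>) * ph a \<alpha> * cnj (ph b \<alpha>)) j i"
    (is "_ = ?R")
proof -
  have "(\<Sum>\<alpha>\<in>{1..N}. cnj (d i \<alpha>) * ph j \<alpha> + cnj (ph i \<alpha>) * d j \<alpha>) =
    (\<Sum>\<alpha>\<in>{1..N}. (\<Sum>k\<in>{1..3}. X j k * (ph k \<alpha> * cnj (ph i \<alpha>)) - ph j \<alpha> * cnj (ph k \<alpha>) * X k i)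
      + (\<Sum>k\<in>{1..3}. Y j k * (of_real (l \<alpha>) * ph k \<alpha> * cnj (ph i \<alpha>)) - of_real (l \<alpha>) * ph j \<alpha> * cnj (ph k \<alpha>) * Y k i))"
  proof (rule sum.cong[OF refl])
    fix \<alpha> assume al: "\<alpha> \<in> {1..N}"
    have W: "Wa \<alpha> a b = X a b + of_real (l \<alpha>) * Y a b" if "a\<in>{1..3}" "b\<in>{1..3}" for a b
      using dec al that by auto
    have cW: "cnj (Wa \<alpha> a b) = - (X b a + of_real (l \<alpha>) * Y b a)" if "a\<in>{1..3}" "b\<in>{1..3}" for a b
      by (subst W[OF that(2,1), symmetric]) (use ah al that in auto)
    have di: "d i \<alpha> = (\<Sum>k\<in>{1..3}. Wa \<alpha> i k * ph k \<alpha>)" and dj: "d j \<alpha> = (\<Sum>k\<in>{1..3}. Wa \<alpha> j k * ph k \<alpha>)"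
      using d al ij by auto
    show "cnj (d i \<alpha>) * ph j \<alpha> + cnj (ph i \<alpha>) * d j \<alpha> =
      (\<Sum>k\<in>{1..3}. X j k * (ph k \<alpha> * cnj (ph i \<alpha>)) - ph j \<alpha> * cnj (ph k \<alpha>) * X k i)
      + (\<Sum>k\<in>{1..3}. Y j k * (of_real (l \<alpha>) * ph k \<alpha> * cnj (ph i \<alpha>)) - of_real (l \<alpha>) * ph j \<alpha> * cnj (ph k \<alpha>) * Y k i)"
    proof -
      have cdi: "cnj (d i \<alpha>) = - (\<Sum>k\<in>{1..3}. (X k i + of_real (l \<alpha>) * Y k i) * cnj (ph k \<alpha>))"
        unfolding di using ij by (simp add: s3 cW algebra_simps)
      show ?thesis unfolding cdi dj using ij by (simp add: s3 W algebra_simps)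
    qed
  qed
  also have "\<dots> = ?R" unfolding comm_sum by (simp add: sum.distrib mult.assoc)
  finally show ?thesis .
qed

lemma range3: "a \<in> {1..3} \<Longrightarrow> a = 1 \<or> a = 2 \<or> (a::nat) = 3" by auto

lemma dec_x: "a\<in>{1..3} \<Longrightarrow> b\<in>{1..3} \<Longrightarrow>
   Wx f g lam p a b - Wx f g (of_real r) p a b = (lam - of_real r) * (Jx a b + of_real r * 0)"
  by (drule range3, drule range3, elim disjE) (simp_all add: Wx_def mat3_def Jx_def algebra_simps)

lemma dec_y: "a\<in>{1..3} \<Longrightarrow> b\<in>{1..3} \<Longrightarrow>
   Wy u f g lam p a b - Wy u f g (of_real r) p a b = (lam - of_real r) * (Jy a b + of_real r * 0)"
  by (drule range3, drule range3, elim disjE) (simp_all add: Wy_def mat3_def Jy_def algebra_simps)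

lemma dec_y0: "a\<in>{1..3} \<Longrightarrow> b\<in>{1..3} \<Longrightarrow>
   Wy u f g (of_real r) p a b = Wy u f g 0 p a b + of_real r * Jy a b"
  by (drule range3, drule range3, elim disjE) (simp_all add: Wy_def mat3_def Jy_def algebra_simps)

lemma dec_t: "a\<in>{1..3} \<Longrightarrow> b\<in>{1..3} \<Longrightarrow>
   Wt u f g v1 v2 lam p a b - Wt u f g v1 v2 (of_real r) p a b = (lam - of_real r) *
     ((lam * A2 a b + A1 (u p) (f p) (g p) a b) + of_real r * A2 a b)"
  by (drule range3, drule range3, elim disjE) (simp_all add: Wt_def mat3_def A1_def A2_def algebra_simps power2_eq_square)

lemma ah_x: "a\<in>{1..3} \<Longrightarrow> b\<in>{1..3} \<Longrightarrow> cnj (Wx f g (of_real r) p a b) = - Wx f g (of_real r) p b a"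
  by (drule range3, drule range3, elim disjE) (simp_all add: Wx_def mat3_def)

lemma ah_y: "a\<in>{1..3} \<Longrightarrow> b\<in>{1..3} \<Longrightarrow> cnj (Wy u f g (of_real r) p a b) = - Wy u f g (of_real r) p b a"
  by (drule range3, drule range3, elim disjE) (simp_all add: Wy_def mat3_def)

lemma ah_t: "a\<in>{1..3} \<Longrightarrow> b\<in>{1..3} \<Longrightarrow> cnj (Wt u f g v1 v2 (of_real r) p a b) = - Wt u f g v1 v2 (of_real r) p b a"
  by (drule range3, drule range3, elim disjE) (simp_all add: Wt_def mat3_def)

lemma x_alg:
  fixes P :: cmat
  assumes cP: "\<And>a b. cnj (P a b) = P b a"
  and PP: "P 1 3 = f p" "P 3 1 = cnj (f p)" "P 2 3 = -g p" "P 3 2 = -cnj (g p)"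
  and ab: "a \<in> {1..3}" "b \<in> {1..3}"
  shows "comm (Wx f g lam p) Cmat a b + comm Jx P a b = 0"
  using range3[OF ab(1)] range3[OF ab(2)]
  apply (elim disjE)
  apply (simp_all add: comm_def mmul_def s3 mat3_def Cmat_def Wx_def Jx_def PP PP[unfolded One_nat_def])
  done

lemma y_alg:
  fixes P :: cmat
  assumes cP: "\<And>a b. cnj (P a b) = P b a"
  and PP: "P 1 2 = -\<i>*u p" "P 2 1 = \<i> * cnj (u p)" "P 1 3 = f p" "P 3 1 = cnj (f p)" "P 2 3 = -g p" "P 3 2 = -cnj (g p)"
  and ab: "a \<in> {1..3}" "b \<in> {1..3}"
  shows "comm (Wy u f g lam p) Cmat a b + comm Jy P a b = 0"
  using range3[OF ab(1)] range3[OF ab(2)]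
  apply (elim disjE)
  apply (simp_all add: comm_def mmul_def s3 mat3_def Cmat_def Wy_def Jy_def PP PP[unfolded One_nat_def])
  apply (simp_all add: algebra_simps)
  done

lemma imul: "\<i> * x = y \<Longrightarrow> x = - \<i> * y" by auto
lemma iadd: "\<i> * a + \<i> * b = 0 \<Longrightarrow> b = -(a::complex)"
proof -
  assume "\<i> * a + \<i> * b = 0"
  then have "\<i> * (a + b) = 0" by (simp add: distrib_left)
  then show ?thesis by (simp add: eq_neg_iff_add_eq_0 add.commute)
qed

lemma x_dest:
  fixes P :: cmat
  assumes "comm (Wx f g lam p) Cmat 1 3 + comm Jx P 1 3 = 0" "comm (Wx f g lam p) Cmat 2 3 + comm Jx P 2 3 = 0"
  shows "P 1 3 = f p" "P 2 3 = - g p"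
  using assms by (simp_all add: comm_def mmul_def s3 mat3_def Cmat_def Wx_def Jx_def iadd)

lemma y_dest:
  fixes P :: cmat
  assumes "comm (Wy u f g lam p) Cmat 1 2 + comm Jy P 1 2 = 0"
  shows "P 1 2 = -\<i> * u p"
proof -
  have "\<i> * P 1 2 = u p" using assms by (simp add: comm_def mmul_def s3 mat3_def Cmat_def Wy_def Jy_def)
  then show ?thesis by (metis imul)
qed


lemma hd_ip:
  assumes "\<forall>a\<in>{1..3}. \<forall>\<alpha>\<in>{1..N}. phi a \<alpha> differentiable (at p)" "i\<in>{1..3}" "j\<in>{1..3}"
  shows "(ip N phi i j has_derivative
     (\<lambda>v. (\<Sum>\<alpha>\<in>{1..N}. cnj (FD (phi i \<alpha>) p v) * phi j \<alpha> p + cnj (phi i \<alpha> p) * FD (phi j \<alpha>) p v))) (at p)"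
proof -
  have dphi: "\<And>a \<alpha>. a\<in>{1..3} \<Longrightarrow> \<alpha>\<in>{1..N} \<Longrightarrow> (phi a \<alpha> has_derivative FD (phi a \<alpha>) p) (at p)"
    using assms(1) frechet_derivative_works by blast
  have "((\<lambda>q. ip N phi i j q) has_derivative
     (\<lambda>v. (\<Sum>\<alpha>\<in>{1..N}. cnj (phi i \<alpha> p) * FD (phi j \<alpha>) p v + cnj (FD (phi i \<alpha>) p v) * phi j \<alpha> p))) (at p)"
    unfolding ip_def
    apply (intro has_derivative_sum has_derivative_mult hd_cnj)
    using dphi assms(2,3) by auto
  then show ?thesis by (simp add: add.commute)
qed

lemma eqaux: "x = A - B - C - D \<Longrightarrow> (x = A) = (B + C + D = (0::complex))"
  by (auto simp: algebra_simps eq_neg_iff_add_eq_0[symmetric])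
lemma eqaux3: "x = A - B - C - D \<Longrightarrow> (x = A) = (B + C + D = (0::complex))"
  by (rule eqaux)

lemma eqaux0: "x = A - B - C - comm (\<lambda>a b. 0) M a b \<Longrightarrow> (x = A) = (B + C = (0::complex))"
  by (simp add: comm_def mmul_def eqaux[where D=0, simplified])

lemma fd_transfer:
  assumes "(h has_derivative h') (at p)" "open D" "p \<in> D" "\<And>q. q \<in> D \<Longrightarrow> h q = k q"
  shows "FD k p = h'"
  using has_derivative_transform_within_open[OF assms] frechet_derivative_at by metis

lemma smooth_diff: "smooth_on D h \<Longrightarrow> p \<in> D \<Longrightarrow> h differentiable (at p)"
  unfolding smooth_on_def by (metis Ck.simps(2))

theorem lemma1:
  fixes N :: nat and lams :: "nat \<Rightarrow> real" and D :: "pt set"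
    and u f g :: "pt \<Rightarrow> complex" and v1 v2 :: "pt \<Rightarrow> real"
    and phi :: "nat \<Rightarrow> nat \<Rightarrow> pt \<Rightarrow> complex"
  assumes "N \<ge> 1"
    and "inj_on lams {1..N}"
    and "\<forall>\<alpha>\<in>{1..N}. lams \<alpha> \<noteq> 0"
    and "open D" and "connected D" and "D \<noteq> {}"
    and "smooth_on D u" and "smooth_on D f" and "smooth_on D g"
    and "smooth_on D v1" and "smooth_on D v2"
    and "\<forall>a\<in>{1..3}. \<forall>\<alpha>\<in>{1..N}. smooth_on D (phi a \<alpha>)"
    and "\<forall>\<alpha>\<in>{1..N}. \<forall>p\<in>D. \<forall>a\<in>{1..3}.
           pdx (phi a \<alpha>) p = (\<Sum>b\<in>{1..3}. Wx f g (of_real (lams \<alpha>)) p a b * phi b \<alpha> p)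
         \<and> pdy (phi a \<alpha>) p = (\<Sum>b\<in>{1..3}. Wy u f g (of_real (lams \<alpha>)) p a b * phi b \<alpha> p)
         \<and> pdt (phi a \<alpha>) p = (\<Sum>b\<in>{1..3}. Wt u f g v1 v2 (of_real (lams \<alpha>)) p a b * phi b \<alpha> p)"
  shows "(\<forall>p\<in>D. \<forall>lam. lam \<notin> of_real ` lams ` {1..N} \<longrightarrow> (\<forall>a\<in>{1..3}. \<forall>b\<in>{1..3}.
             pdx (\<lambda>q. Lmat N lams phi lam q a b) p = comm (Wx f g lam p) (Lmat N lams phi lam p) a b
           \<and> pdy (\<lambda>q. Lmat N lams phi lam q a b) p = comm (Wy u f g lam p) (Lmat N lams phi lam p) a b
           \<and> pdt (\<lambda>q. Lmat N lams phi lam q a b) p = comm (Wt u f g v1 v2 lam p) (Lmat N lams phi lam p) a b))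
     \<longleftrightarrow>
         (\<forall>p\<in>D. ip N phi 2 1 p = - \<i> * u p \<and> ip N phi 3 1 p = f p \<and> ip N phi 3 2 p = - g p)"
proof -
  note lax = assms(13)
  have diff: "\<forall>a\<in>{1..3}. \<forall>\<alpha>\<in>{1..N}. phi a \<alpha> differentiable (at p)" if "p \<in> D" for p
    using assms(12) smooth_diff that by blast
  define P where "P p = (\<lambda>a b. \<Sum>\<alpha>\<in>{1..N}. phi a \<alpha> p * cnj (phi b \<alpha> p))" for p
  define Q where "Q p = (\<lambda>a b. \<Sum>\<alpha>\<in>{1..N}. of_real (lams \<alpha>) * phi a \<alpha> p * cnj (phi b \<alpha> p))" for p
  have Lm: "Lmat N lams phi lam p = (\<lambda>a b. Cmat a b + (\<Sum>\<alpha>\<in>{1..N}. phi a \<alpha> p * cnj (phi b \<alpha> p) / (lam - of_real (lams \<alpha>))))" for lam p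
    by (simp add: Lmat_def)
  have ne: "\<forall>\<alpha>\<in>{1..N}. lam \<noteq> of_real (lams \<alpha>)" if "lam \<notin> of_real ` lams ` {1..N}" for lam
    using that by auto
  have comm0: "comm (\<lambda>a b. 0) M a b = 0" for M a b by (simp add: comm_def mmul_def)
  have key_x: "(pdx (\<lambda>q. Lmat N lams phi lam q a b) p = comm (Wx f g lam p) (Lmat N lams phi lam p) a b)
      \<longleftrightarrow> comm (Wx f g lam p) Cmat a b + comm Jx (P p) a b = 0"
    if p: "p \<in> D" and lam: "lam \<notin> of_real ` lams ` {1..N}" and ab: "a\<in>{1..3}" "b\<in>{1..3}" for p lam a b
  proof -
    have "pdx (\<lambda>q. Lmat N lams phi lam q a b) p =
      (\<Sum>\<alpha>\<in>{1..N}. (pdx (phi a \<alpha>) p * cnj (phi b \<alpha> p) + phi a \<alpha> p * cnj (pdx (phi b \<alpha>) p)) / (lam - of_real (lams \<alpha>)))"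
      unfolding pdx_def by (rule deriv_L[OF diff[OF p] ab])
    also have "\<dots> = comm (Wx f g lam p) (Lmat N lams phi lam p) a b - comm (Wx f g lam p) Cmat a b
      - comm Jx (P p) a b - comm (\<lambda>a b. 0) (Q p) a b"
      unfolding Lm P_def Q_def
      apply (rule sumL[where Wa="\<lambda>\<alpha>. Wx f g (of_real (lams \<alpha>)) p"])
      using lax p apply blast
      using ah_x apply blast
      using dec_x apply blast
      using ne[OF lam] ab by auto
    finally show ?thesis by (rule eqaux0)
  qed
  have key_y: "(pdy (\<lambda>q. Lmat N lams phi lam q a b) p = comm (Wy u f g lam p) (Lmat N lams phi lam p) a b)
      \<longleftrightarrow> comm (Wy u f g lam p) Cmat a b + comm Jy (P p) a b = 0"
    if p: "p \<in> D" and lam: "lam \<notin> of_real ` lams ` {1..N}" and ab: "a\<in>{1..3}" "b\<in>{1..3}" for p lam a b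
  proof -
    have "pdy (\<lambda>q. Lmat N lams phi lam q a b) p =
      (\<Sum>\<alpha>\<in>{1..N}. (pdy (phi a \<alpha>) p * cnj (phi b \<alpha> p) + phi a \<alpha> p * cnj (pdy (phi b \<alpha>) p)) / (lam - of_real (lams \<alpha>)))"
      unfolding pdy_def by (rule deriv_L[OF diff[OF p] ab])
    also have "\<dots> = comm (Wy u f g lam p) (Lmat N lams phi lam p) a b - comm (Wy u f g lam p) Cmat a b
      - comm Jy (P p) a b - comm (\<lambda>a b. 0) (Q p) a b"
      unfolding Lm P_def Q_def
      apply (rule sumL[where Wa="\<lambda>\<alpha>. Wy u f g (of_real (lams \<alpha>)) p"])
      using lax p apply blast
      using ah_y apply blast
      using dec_y apply blast
      using ne[OF lam] ab by auto
    finally show ?thesis by (rule eqaux0)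
  qed
  have key_t: "(pdt (\<lambda>q. Lmat N lams phi lam q a b) p = comm (Wt u f g v1 v2 lam p) (Lmat N lams phi lam p) a b)
      \<longleftrightarrow> comm (Wt u f g v1 v2 lam p) Cmat a b + comm (\<lambda>a b. lam * A2 a b + A1 (u p) (f p) (g p) a b) (P p) a b + comm A2 (Q p) a b = 0"
    if p: "p \<in> D" and lam: "lam \<notin> of_real ` lams ` {1..N}" and ab: "a\<in>{1..3}" "b\<in>{1..3}" for p lam a b
  proof -
    have "pdt (\<lambda>q. Lmat N lams phi lam q a b) p =
      (\<Sum>\<alpha>\<in>{1..N}. (pdt (phi a \<alpha>) p * cnj (phi b \<alpha> p) + phi a \<alpha> p * cnj (pdt (phi b \<alpha>) p)) / (lam - of_real (lams \<alpha>)))"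
      unfolding pdt_def by (rule deriv_L[OF diff[OF p] ab])
    also have "\<dots> = comm (Wt u f g v1 v2 lam p) (Lmat N lams phi lam p) a b - comm (Wt u f g v1 v2 lam p) Cmat a b
      - comm (\<lambda>a b. lam * A2 a b + A1 (u p) (f p) (g p) a b) (P p) a b - comm A2 (Q p) a b"
      unfolding Lm P_def Q_def
      apply (rule sumL[where Wa="\<lambda>\<alpha>. Wt u f g v1 v2 (of_real (lams \<alpha>)) p"])
      using lax p apply blast
      using ah_t apply blast
      using dec_t apply blast
      using ne[OF lam] ab by auto
    finally show ?thesis by (rule eqaux)
  qed
  have ipP: "ip N phi i j p = P p j i" for i j p
    unfolding ip_def P_def by (simp add: mult.commute)
  have cP: "cnj (P p a b) = P p b a" for p a b
    unfolding P_def by (simp add: mult.commute)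
  have cQ: "cnj (Q p a b) = Q p b a" for p a b
    unfolding Q_def by (simp add: mult.commute mult.left_commute)
  have dip: "pdy (ip N phi i j) p = comm (Wy u f g 0 p) (P p) j i + comm Jy (Q p) j i"
    if p: "p \<in> D" and ij: "i\<in>{1..3}" "j\<in>{1..3}" for p i j
  proof -
    have "pdy (ip N phi i j) p = (\<Sum>\<alpha>\<in>{1..N}. cnj (pdy (phi i \<alpha>) p) * phi j \<alpha> p + cnj (phi i \<alpha> p) * pdy (phi j \<alpha>) p)"
      unfolding pdy_def by (rule deriv_ip[OF diff[OF p] ij])
    also have "\<dots> = comm (Wy u f g 0 p) (P p) j i + comm Jy (Q p) j i"
      unfolding P_def Q_def
      apply (rule sumIP[where Wa="\<lambda>\<alpha>. Wy u f g (of_real (lams \<alpha>)) p"])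
      using lax p apply blast
      using ah_y apply blast
      using dec_y0 apply blast
      using ij by auto
    finally show ?thesis .
  qed
  have dk: "pdy k p = c * pdy (ip N phi i j) p"
    if p: "p \<in> D" and ij: "i\<in>{1..3}" "j\<in>{1..3}" and k: "\<forall>q\<in>D. k q = c * ip N phi i j q" for p i j k c
  proof -
    have "ip N phi i j differentiable (at p)"
      using hd_ip[OF diff[OF p] ij] by (rule differentiableI)
    then have h: "(ip N phi i j has_derivative FD (ip N phi i j) p) (at p)"
      unfolding frechet_derivative_works .
    have hm: "((\<lambda>q. c * ip N phi i j q) has_derivative (\<lambda>v. c * FD (ip N phi i j) p v)) (at p)"
      by (rule has_derivative_mult_right[OF h])
    have "FD k p = (\<lambda>v. c * FD (ip N phi i j) p v)"
      by (rule fd_transfer[OF hm assms(4) p]) (use k in simp)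
    then show ?thesis unfolding pdy_def by simp
  qed
  show ?thesis
  proof
    assume H: "\<forall>p\<in>D. \<forall>lam. lam \<notin> of_real ` lams ` {1..N} \<longrightarrow> (\<forall>a\<in>{1..3}. \<forall>b\<in>{1..3}.
             pdx (\<lambda>q. Lmat N lams phi lam q a b) p = comm (Wx f g lam p) (Lmat N lams phi lam p) a b
           \<and> pdy (\<lambda>q. Lmat N lams phi lam q a b) p = comm (Wy u f g lam p) (Lmat N lams phi lam p) a b
           \<and> pdt (\<lambda>q. Lmat N lams phi lam q a b) p = comm (Wt u f g v1 v2 lam p) (Lmat N lams phi lam p) a b)"
    show "\<forall>p\<in>D. ip N phi 2 1 p = - \<i> * u p \<and> ip N phi 3 1 p = f p \<and> ip N phi 3 2 p = - g p"
    proof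
      fix p assume p: "p \<in> D"
      have lamI: "\<i> \<notin> of_real ` lams ` {1..N}" by (auto simp: complex_eq_iff)
      have n3: "(1::nat)\<in>{1..3}" "(2::nat)\<in>{1..3}" "(3::nat)\<in>{1..3}" by auto
      have Hp: "\<And>a b. a\<in>{1..3} \<Longrightarrow> b\<in>{1..3} \<Longrightarrow>
             pdx (\<lambda>q. Lmat N lams phi \<i> q a b) p = comm (Wx f g \<i> p) (Lmat N lams phi \<i> p) a b
           \<and> pdy (\<lambda>q. Lmat N lams phi \<i> q a b) p = comm (Wy u f g \<i> p) (Lmat N lams phi \<i> p) a b"
        using H[rule_format, OF p lamI] by blast
      have e13: "comm (Wx f g \<i> p) Cmat 1 3 + comm Jx (P p) 1 3 = 0"
        using Hp[OF n3(1) n3(3)] key_x[OF p lamI n3(1) n3(3)] by blast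
      have e23: "comm (Wx f g \<i> p) Cmat 2 3 + comm Jx (P p) 2 3 = 0"
        using Hp[OF n3(2) n3(3)] key_x[OF p lamI n3(2) n3(3)] by blast
      have e12: "comm (Wy u f g \<i> p) Cmat 1 2 + comm Jy (P p) 1 2 = 0"
        using Hp[OF n3(1) n3(2)] key_y[OF p lamI n3(1) n3(2)] by blast
      show "ip N phi 2 1 p = - \<i> * u p \<and> ip N phi 3 1 p = f p \<and> ip N phi 3 2 p = - g p"
        unfolding ipP using x_dest[OF e13 e23] y_dest[OF e12] by simp
    qed
  next
    assume C: "\<forall>p\<in>D. ip N phi 2 1 p = - \<i> * u p \<and> ip N phi 3 1 p = f p \<and> ip N phi 3 2 p = - g p"
    show "\<forall>p\<in>D. \<forall>lam. lam \<notin> of_real ` lams ` {1..N} \<longrightarrow> (\<forall>a\<in>{1..3}. \<forall>b\<in>{1..3}.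
             pdx (\<lambda>q. Lmat N lams phi lam q a b) p = comm (Wx f g lam p) (Lmat N lams phi lam p) a b
           \<and> pdy (\<lambda>q. Lmat N lams phi lam q a b) p = comm (Wy u f g lam p) (Lmat N lams phi lam p) a b
           \<and> pdt (\<lambda>q. Lmat N lams phi lam q a b) p = comm (Wt u f g v1 v2 lam p) (Lmat N lams phi lam p) a b)"
    proof (intro ballI allI impI)
      fix p and lam :: complex and a b :: nat assume p: "p \<in> D" and lam: "lam \<notin> of_real ` lams ` {1..N}" and ab: "a\<in>{1..3}" "b\<in>{1..3}"
      have P12: "P p 1 2 = -\<i> * u p" and P13: "P p 1 3 = f p" and P23: "P p 2 3 = - g p"
        using C p by (auto simp: ipP)
      have P21: "P p 2 1 = \<i> * cnj (u p)" using cP[of p 1 2] P12 by simp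
      have P31: "P p 3 1 = cnj (f p)" using cP[of p 1 3] P13 by simp
      have P32: "P p 3 2 = - cnj (g p)" using cP[of p 2 3] P23 by simp
      have uy: "pdy u p = \<i> * (comm (Wy u f g 0 p) (P p) 1 2 + comm Jy (Q p) 1 2)"
      proof -
        have "\<forall>q\<in>D. u q = \<i> * ip N phi 2 1 q" using C by auto
        then show ?thesis using dk[OF p, of 2 1 u \<i>] dip[OF p, of 2 1] by simp
      qed
      have fy: "pdy f p = comm (Wy u f g 0 p) (P p) 1 3 + comm Jy (Q p) 1 3"
      proof -
        have "\<forall>q\<in>D. f q = 1 * ip N phi 3 1 q" using C by auto
        then show ?thesis using dk[OF p, of 3 1 f 1] dip[OF p, of 3 1] by simp
      qed
      have gy: "pdy g p = - (comm (Wy u f g 0 p) (P p) 2 3 + comm Jy (Q p) 2 3)"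
      proof -
        have "\<forall>q\<in>D. g q = (-1) * ip N phi 3 2 q" using C by auto
        then show ?thesis using dk[OF p, of 3 2 g "-1"] dip[OF p, of 3 2] by simp
      qed
      have ex: "comm (Wx f g lam p) Cmat a b + comm Jx (P p) a b = 0"
        by (rule x_alg[where f=f and g=g and p=p, OF cP[of p] P13 P31 P23 P32 ab])
      have ey: "comm (Wy u f g lam p) Cmat a b + comm Jy (P p) a b = 0"
        by (rule y_alg[where u=u and f=f and g=g and p=p, OF cP[of p] P12 P21 P13 P31 P23 P32 ab])
      have et: "comm (Wt u f g v1 v2 lam p) Cmat a b + comm (\<lambda>a b. lam * A2 a b + A1 (u p) (f p) (g p) a b) (P p) a b + comm A2 (Q p) a b = 0"
        by (rule t_alg[where u=u and f=f and g=g and p=p, OF cP[of p] cQ[of p] P12 P21 P13 P31 P23 P32 uy fy gy ab])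
      show "pdx (\<lambda>q. Lmat N lams phi lam q a b) p = comm (Wx f g lam p) (Lmat N lams phi lam p) a b
           \<and> pdy (\<lambda>q. Lmat N lams phi lam q a b) p = comm (Wy u f g lam p) (Lmat N lams phi lam p) a b
           \<and> pdt (\<lambda>q. Lmat N lams phi lam q a b) p = comm (Wt u f g v1 v2 lam p) (Lmat N lams phi lam p) a b"
        using key_x[OF p lam ab] key_y[OF p lam ab] key_t[OF p lam ab] ex ey et by blast
    qed
  qed
qed

end
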